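(* For every positive integer $s$ and every positive integer $l$, the vector of polynomials $I^{[lp^s-1]}_{p^s}(z)\in\mathbb Z[z]^n$ is a solution of the KZ system modulo $p^s$.
   Context: Let $p$ be an odd prime, $g\ge1$, $n=2g+1$, with $p>n$. Write $z=(z_1,\dots,z_n)$. For $1\le i\ne j\le n$ let $\Omega_{ij}$ be the $n\times n$ matrix whose $(i,i)$ and $(j,j)$ entries are $-1$, whose $(i,j)$ and $(j,i)$ entries are $1$, and all of whose other entries are $0$. The KZ system is the system for a column vector $I=(I_1,\dots,I_n)$ of functions of $z$: $\frac{\partial I}{\partial z_i}=\frac12\sum_{j\ne i}\frac{\Omega_{ij}}{z_i-z_j}\,I$ for $i=1,\dots,n$, together with $I_1+\dots+I_n=0$. For a positive integer $s$ let $\pi_s$ denote reduction modulo $p^s$ (on $\mathbb Z$, $\mathbb Z[z]$, $\mathbb Z[z]^n$). A vector $I(z)\in\mathbb Z[z]^n$ is a solution of the KZ system modulo $p^s$ if $\pi_s I\in(\mathbb Z/p^s\mathbb Z)[z]^n$ satisfies the KZ system (the differential equations being understood in $(\mathbb Z/p^s\mathbb Z)[z]$ after multiplying the $i$-th equation by $\prod_{j\ne i}(z_i-z_j)$). For a positive integer $r$ put $M_r=(p^r-1)/2$, $\Phi_{p^r}(x,z)=\prod_{i=1}^n(x-z_i)^{M_r}\in\mathbb Z[x,z]$, and expand $\Big(\frac{\Phi_{p^r}(x,z)}{x-z_1},\dots,\frac{\Phi_{p^r}(x,z)}{x-z_n}\Big)=\sum_i P^i_{p^r}(z)\,x^i$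 with $P^i_{p^r}(z)\in\mathbb Z[z]^n$. For a positive integer $l$ set $I^{[lp^r-1]}_{p^r}(z)=P^{lp^r-1}_{p^r}(z)$. *)

theory Defs
  imports "HOL-Library.Poly_Mapping" "HOL-Computational_Algebra.Polynomial"
begin

text \<open>Multivariate polynomials with integer coefficients in the variables z_1, z_2, ...
  (variables indexed by nat; only z_1..z_n are used): finitely supported maps from
  exponent vectors to coefficients.\<close>
type_synonym mpoly = "(nat \<Rightarrow>\<^sub>0 nat) \<Rightarrow>\<^sub>0 int"

definition zvar :: "nat \<Rightarrow> mpoly" where
  "zvar i = Poly_Mapping.single (Poly_Mapping.single i 1) 1"

definition pdz :: "nat \<Rightarrow> mpoly \<Rightarrow> mpoly" where
  "pdz i P = (\<Sum>m\<in>Poly_Mapping.keys P. Poly_Mapping.single (m - Poly_Mapping.single i 1)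
                              (int (Poly_Mapping.lookup m i) * Poly_Mapping.lookup P m))"

text \<open>Congruence of polynomials modulo an integer q (all coefficients of the difference
  divisible by q), i.e. equality after reduction to (Z/qZ)[z].\<close>
definition mcong :: "int \<Rightarrow> mpoly \<Rightarrow> mpoly \<Rightarrow> bool" where
  "mcong q P Q \<longleftrightarrow> (\<forall>m. q dvd Poly_Mapping.lookup (P - Q) m)"

definition Omega_app :: "nat \<Rightarrow> nat \<Rightarrow> (nat \<Rightarrow> mpoly) \<Rightarrow> nat \<Rightarrow> mpoly" where
  "Omega_app i j I k =
     (if k = i then I j - I i else if k = j then I i - I j else 0)"

text \<open>The i-th equation is multiplied by prod_{j<>i}(z_i - z_j); the factor 1/2 is the inverse
  of 2 in Z/p^s Z, represented by the integer (p^s+1)/2.\<close>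
definition KZ_mod :: "nat \<Rightarrow> nat \<Rightarrow> nat \<Rightarrow> (nat \<Rightarrow> mpoly) \<Rightarrow> bool" where
  "KZ_mod p s n I \<longleftrightarrow>
     (let q = int p ^ s; half = (int p ^ s + 1) div 2 in
      (\<forall>i\<in>{1..n}. \<forall>k\<in>{1..n}.
         mcong q
           ((\<Prod>j\<in>{1..n}-{i}. zvar i - zvar j) * pdz i (I k))
           (of_int half * (\<Sum>j\<in>{1..n}-{i}.
               (\<Prod>l\<in>{1..n}-{i,j}. zvar i - zvar l) * Omega_app i j I k)))
      \<and> mcong q (\<Sum>k\<in>{1..n}. I k) 0)"

definition Mr :: "nat \<Rightarrow> nat \<Rightarrow> nat" where
  "Mr p r = (p ^ r - 1) div 2"

definition Phi :: "nat \<Rightarrow> nat \<Rightarrow> nat \<Rightarrow> mpoly poly" where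
  "Phi p r n = (\<Prod>i\<in>{1..n}. [:- zvar i, 1:] ^ Mr p r)"

definition Phi_quot :: "nat \<Rightarrow> nat \<Rightarrow> nat \<Rightarrow> nat \<Rightarrow> mpoly poly" where
  "Phi_quot p r n k = (THE Q. Phi p r n = [:- zvar k, 1:] * Q)"

definition Pvec :: "nat \<Rightarrow> nat \<Rightarrow> nat \<Rightarrow> nat \<Rightarrow> nat \<Rightarrow> mpoly" where
  "Pvec p r n i k = coeff (Phi_quot p r n k) i"

definition Ivec :: "nat \<Rightarrow> nat \<Rightarrow> nat \<Rightarrow> nat \<Rightarrow> nat \<Rightarrow> mpoly" where
  "Ivec p r n l = Pvec p r n (l * p ^ r - 1)"

end

theory Submission
  imports Defs
begin

lemma "(x::mpoly) * y = 0 \<Longrightarrow> x = 0 \<or> y = 0" by simp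
definition dm :: "nat \<Rightarrow> (nat \<Rightarrow>\<^sub>0 nat) \<Rightarrow> mpoly" where
  "dm i m = Poly_Mapping.single (m - Poly_Mapping.single i 1) (int (Poly_Mapping.lookup m i))"

lemma frag_cmul_single: "frag_cmul c (Poly_Mapping.single k d) = Poly_Mapping.single k (c*d)"
  by (rule poly_mapping_eqI) (simp add: lookup_single when_def)

lemma pdz_frag: "pdz i = frag_extend (dm i)"
  by (rule ext) (simp add: pdz_def frag_extend_def dm_def frag_cmul_single mult.commute)

lemma pdz_add: "pdz i (a + b) = pdz i a + pdz i b" by (simp add: pdz_frag frag_extend_add)
lemma pdz_diff: "pdz i (a - b) = pdz i a - pdz i b" by (simp add: pdz_frag frag_extend_diff)
lemma pdz_0[simp]: "pdz i 0 = 0" by (simp add: pdz_frag)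
lemma pdz_sum: "finite A \<Longrightarrow> pdz i (sum f A) = (\<Sum>x\<in>A. pdz i (f x))"
  by (simp add: pdz_frag frag_extend_sum o_def)
lemma pdz_single: "pdz i (frag_of m) = dm i m" by (simp add: pdz_frag)

lemma lookup_minus_nat: "Poly_Mapping.lookup (a - b) k = Poly_Mapping.lookup a k - (Poly_Mapping.lookup b k :: nat)"
  by (simp add: lookup_minus)

lemma dm_mult: "dm i (m + m') = dm i m * frag_of m' + frag_of m * dm i m'"
proof (cases "Poly_Mapping.lookup m i = 0")
  case True
  then have "m + m' - Poly_Mapping.single i 1 = m + (m' - Poly_Mapping.single i 1) \<or> Poly_Mapping.lookup m' i = 0"
    by (auto intro!: poly_mapping_eqI simp: lookup_minus_nat lookup_add lookup_single when_def)
  then show ?thesis using True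
    by (auto simp: dm_def mult_single lookup_add)
next
  case False
  have e1: "m + m' - Poly_Mapping.single i 1 = m - Poly_Mapping.single i 1 + m'"
    using False by (auto intro!: poly_mapping_eqI simp: lookup_minus_nat lookup_add lookup_single when_def)
  have e2: "m + m' - Poly_Mapping.single i 1 = m + (m' - Poly_Mapping.single i 1) \<or> Poly_Mapping.lookup m' i = 0"
    by (auto intro!: poly_mapping_eqI simp: lookup_minus_nat lookup_add lookup_single when_def)
  show ?thesis using e1 e2
    by (auto simp: dm_def mult_single lookup_add single_add[symmetric] add_ac)
qed

lemma pdz_mult: "pdz i (a * b) = pdz i a * b + a * pdz i b"
proof (induction a rule: frag_induction[OF subset_UNIV])
  case 1 then show ?case by simp
next
  case (2 m)
  show ?case
  proof (induction b rule: frag_induction[OF subset_UNIV])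
    case 1 then show ?case by simp
  next
    case (2 m')
    then show ?case by (simp add: mult_single pdz_single dm_mult)
  next
    case (3 a b) then show ?case by (simp add: pdz_diff algebra_simps)
  qed
next
  case (3 a b) then show ?case by (simp add: pdz_diff algebra_simps)
qed

lemma pdz_zvar: "pdz i (zvar j) = (if i = j then 1 else 0)"
  by (auto simp: zvar_def pdz_single dm_def lookup_single when_def)

lemma pdz_one[simp]: "pdz i 1 = 0"
  using pdz_mult[of i 1 1] by simp

definition Dz :: "nat \<Rightarrow> mpoly poly \<Rightarrow> mpoly poly" where
  "Dz i P = map_poly (pdz i) P"

lemma coeff_Dz: "coeff (Dz i P) n = pdz i (coeff P n)"
  by (simp add: Dz_def coeff_map_poly)

lemma Dz_add: "Dz i (P + Q) = Dz i P + Dz i Q"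
  by (rule poly_eqI) (simp add: coeff_Dz pdz_add)
lemma Dz_diff: "Dz i (P - Q) = Dz i P - Dz i Q"
  by (rule poly_eqI) (simp add: coeff_Dz pdz_diff)
lemma Dz_mult: "Dz i (P * Q) = Dz i P * Q + P * Dz i Q"
  by (rule poly_eqI) (simp add: coeff_Dz coeff_mult pdz_sum pdz_mult sum.distrib)
lemma Dz_smult: "Dz i (smult a P) = smult (pdz i a) P + smult a (Dz i P)"
  by (rule poly_eqI) (simp add: coeff_Dz pdz_mult)
lemma Dz_power_Suc: "Dz i (P ^ Suc k) = smult (of_nat (Suc k)) (P ^ k * Dz i P)"
proof (induction k)
  case 0
  have "Dz i 1 = 0" by (rule poly_eqI) (simp add: coeff_Dz coeff_1)
  then show ?case by (simp add: Dz_mult)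
next
  case (Suc k)
  have "Dz i (P ^ Suc (Suc k)) = Dz i P * P ^ Suc k + P * Dz i (P ^ Suc k)"
    by (simp only: power_Suc[of P "Suc k"] Dz_mult)
  also have "\<dots> = smult (of_nat (Suc (Suc k))) (P ^ Suc k * Dz i P)"
    unfolding Suc.IH of_nat_Suc[of "Suc k"] smult_add_left by (simp add: algebra_simps)
  finally show ?case .
qed
lemma Dz_power: "Dz i (P ^ k) = smult (of_nat k) (P ^ (k - 1) * Dz i P)"
proof (cases k)
  case 0
  have "Dz i 1 = 0" by (rule poly_eqI) (simp add: coeff_Dz coeff_1)
  then show ?thesis using 0 by simp
next
  case (Suc k') then show ?thesis by (simp only: Dz_power_Suc) simp
qed
lemma Dz_prod0: "finite A \<Longrightarrow> (\<And>a. a \<in> A \<Longrightarrow> Dz i (f a) = 0) \<Longrightarrow> Dz i (prod f A) = 0"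
proof (induction A rule: finite_induct)
  case empty
  show ?case by (rule poly_eqI) (simp add: coeff_Dz coeff_1)
next
  case (insert x F) then show ?case by (simp add: Dz_mult)
qed

definition L :: "nat \<Rightarrow> mpoly poly" where "L k = [:- zvar k, 1:]"

lemma Dz_L: "Dz i (L k) = (if i = k then [:-1:] else 0)"
  by (rule poly_eqI) (auto simp: coeff_Dz L_def coeff_pCons pdz_zvar split: nat.splits simp flip: diff_0 simp add: pdz_diff)

lemma Dz_Lpow0: "i \<noteq> k \<Longrightarrow> Dz i (L k ^ e) = 0"
  by (simp add: Dz_power Dz_L)

lemma pderiv_L: "pderiv (L k) = 1"
  by (simp add: L_def pderiv_pCons)

lemma L_diff: "L i - L j = [:zvar j - zvar i:]"
  by (simp add: L_def)

lemma L_nonzero: "L k \<noteq> 0" by (simp add: L_def)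

definition Qp :: "nat \<Rightarrow> nat set \<Rightarrow> mpoly poly" where "Qp M A = (\<Prod>m\<in>A. L m ^ M)"
definition Fq where "Fq n M k = L k ^ (M - 1) * Qp M ({1..n} - {k})"
definition Gq where "Gq n M i j = L i ^ (M - 1) * L j ^ (M - 1) * Qp M ({1..n} - {i, j})"
definition Hq where "Hq n M i = L i ^ (M - 1 - 1) * Qp M ({1..n} - {i})"

lemma Qp_remove: "finite A \<Longrightarrow> k \<in> A \<Longrightarrow> Qp M A = L k ^ M * Qp M (A - {k})"
  by (simp add: Qp_def prod.remove)

lemma set_rem2: "{1..n} - {j} - {i} = {1..n} - {i, j}" "{1..n} - {i} - {j} = {1..n} - {i, j}" by auto

lemma Phi_eq: "Phi p r n = Qp (Mr p r) {1..n}"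
  by (simp add: Phi_def Qp_def L_def)

lemma Phi_L_F: "M \<ge> 1 \<Longrightarrow> k \<in> {1..n} \<Longrightarrow> Qp M {1..n} = L k * Fq n M k"
proof -
  assume "M \<ge> 1" "k \<in> {1..n}"
  then have "L k ^ M = L k * L k ^ (M - 1)" by (metis Suc_diff_le diff_Suc_1 power_Suc)
  then show ?thesis using Qp_remove[of "{1..n}" k M] \<open>k \<in> {1..n}\<close> by (simp add: Fq_def)
qed

lemma Phi_quot_eq: "M = Mr p r \<Longrightarrow> M \<ge> 1 \<Longrightarrow> k \<in> {1..n} \<Longrightarrow> Phi_quot p r n k = Fq n M k"
  unfolding Phi_quot_def
proof (rule the_equality)
  assume "M = Mr p r" "M \<ge> 1" "k \<in> {1..n}"
  then show "Phi p r n = [:- zvar k, 1:] * Fq n M k"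
    using Phi_L_F Phi_eq L_def by metis
  fix Q assume "Phi p r n = [:- zvar k, 1:] * Q"
  then have "L k * Q = L k * Fq n M k" using Phi_L_F Phi_eq L_def \<open>M = _\<close> \<open>M \<ge> 1\<close> \<open>k \<in> _\<close> by metis
  then show "Q = Fq n M k" using L_nonzero by simp
qed

lemma F_diff: "i \<noteq> j \<Longrightarrow> i \<in> {1..n} \<Longrightarrow> j \<in> {1..n} \<Longrightarrow> M \<ge> 1 \<Longrightarrow>
   Fq n M j - Fq n M i = smult (zvar j - zvar i) (Gq n M i j)"
proof -
  assume a: "i \<noteq> j" "i \<in> {1..n}" "j \<in> {1..n}" "M \<ge> 1"
  have 1: "Qp M ({1..n} - {j}) = L i ^ M * Qp M ({1..n} - {i, j})"
    using Qp_remove[of "{1..n} - {j}" i M] a unfolding set_rem2 by auto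
  have 2: "Qp M ({1..n} - {i}) = L j ^ M * Qp M ({1..n} - {i, j})"
    using Qp_remove[of "{1..n} - {i}" j M] a unfolding set_rem2 by (auto simp: insert_commute)
  have p: "L x ^ M = L x * L x ^ (M - 1)" for x using a(4) by (metis Suc_diff_le diff_Suc_1 power_Suc)
  have "Fq n M j - Fq n M i = (L i - L j) * Gq n M i j"
    unfolding Fq_def Gq_def 1 2 p[of i] p[of j] by (simp add: algebra_simps)
  also have "\<dots> = smult (zvar j - zvar i) (Gq n M i j)" by (simp add: L_diff)
  finally show ?thesis .
qed

lemma G_sym: "Gq n M i j = Gq n M j i"
  by (simp add: Gq_def insert_commute mult.commute)


lemma Dz_L': "Dz i (L k) = (if i = k then - 1 else 0)"
  proof -
  have "[:-1:] = (-1 :: mpoly poly)" by (rule poly_eqI) (simp add: coeff_pCons coeff_1 split: nat.split)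
  then show ?thesis using Dz_L[of i k] by simp
qed

lemma Dz_Lpow_same: "Dz i (L i ^ e) = - smult (of_nat e) (L i ^ (e - 1))"
  by (simp add: Dz_power Dz_L')

lemma DzQ0: "i \<notin> A \<Longrightarrow> finite A \<Longrightarrow> Dz i (Qp M A) = 0"
  unfolding Qp_def by (rule Dz_prod0) (auto intro!: Dz_Lpow0)

lemma Dz_F_ne: "i \<noteq> k \<Longrightarrow> i \<in> {1..n} \<Longrightarrow> k \<in> {1..n} \<Longrightarrow>
   Dz i (Fq n M k) = smult (- of_nat M) (Gq n M i k)"
proof -
  assume a: "i \<noteq> k" "i \<in> {1..n}" "k \<in> {1..n}"
  have 1: "Qp M ({1..n} - {k}) = L i ^ M * Qp M ({1..n} - {i, k})"
    using Qp_remove[of "{1..n} - {k}" i M] a unfolding set_rem2 by auto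
  have z: "Dz i (Qp M ({1..n} - {i, k})) = 0" by (rule DzQ0) auto
  have z2: "Dz i (L k ^ (M - 1)) = 0" using a by (simp add: Dz_Lpow0)
  have "Dz i (Fq n M k) = L k ^ (M - 1) * (Dz i (L i ^ M) * Qp M ({1..n} - {i, k}))"
    unfolding Fq_def 1 Dz_mult z z2 by simp
  also have "\<dots> = smult (- of_nat M) (Gq n M i k)"
    unfolding Dz_Lpow_same Gq_def by (simp add: mult.assoc mult.left_commute)
  finally show ?thesis .
qed

lemma Dz_F_eq: "i \<in> {1..n} \<Longrightarrow> Dz i (Fq n M i) = smult (- of_nat (M - 1)) (Hq n M i)"
proof -
  have z: "Dz i (Qp M ({1..n} - {i})) = 0" by (rule DzQ0) auto
  have "Dz i (Fq n M i) = Dz i (L i ^ (M - 1)) * Qp M ({1..n} - {i})"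
    unfolding Fq_def Dz_mult z by simp
  also have "\<dots> = smult (- of_nat (M - 1)) (Hq n M i)"
    unfolding Dz_Lpow_same Hq_def by simp
  finally show ?thesis .
qed

lemma smult_sum_right: "smult a (sum f A) = (\<Sum>x\<in>A. smult a (f x))"
  by (induct A rule: infinite_finite_induct) (auto simp: smult_add_right)

lemma Diff_rem2: "A - {i} - {j} = A - {i, j}" by auto

lemma pderiv_Qp: "finite A \<Longrightarrow> pderiv (Qp M A) = smult (of_nat M) (\<Sum>j\<in>A. L j ^ (M - 1) * Qp M (A - {j}))"
  by (simp add: Qp_def pderiv_prod pderiv_power pderiv_L smult_sum_right algebra_simps)

lemma pderiv_Phi: "pderiv (Qp M {1..n}) = smult (of_nat M) (\<Sum>k\<in>{1..n}. Fq n M k)"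
  by (simp add: pderiv_Qp Fq_def)

lemma pderiv_F: "i \<in> {1..n} \<Longrightarrow> pderiv (Fq n M i) =
   smult (of_nat (M - 1)) (Hq n M i) + smult (of_nat M) (\<Sum>j\<in>{1..n} - {i}. Gq n M i j)"
proof -
  assume i: "i \<in> {1..n}"
  have "pderiv (Fq n M i) = L i ^ (M - 1) * pderiv (Qp M ({1..n} - {i})) + Qp M ({1..n} - {i}) * pderiv (L i ^ (M - 1))"
    by (simp add: Fq_def pderiv_mult)
  also have "pderiv (Qp M ({1..n} - {i})) = smult (of_nat M) (\<Sum>j\<in>{1..n} - {i}. L j ^ (M - 1) * Qp M ({1..n} - {i, j}))"
    by (simp add: pderiv_Qp Diff_rem2)
  finally show ?thesis
    by (simp add: Hq_def Gq_def pderiv_power pderiv_L sum_distrib_left algebra_simps)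
qed

lemma lookup_ofint_mult: "Poly_Mapping.lookup (of_int c * X :: mpoly) m = c * Poly_Mapping.lookup X m"
proof (induction X rule: frag_induction[OF subset_UNIV])
  case 1 then show ?case by simp
next
  case (2 x)
  have "(of_int c :: mpoly) * frag_of x = Poly_Mapping.single x c"
    by (simp flip: single_of_int add: mult_single)
  then show ?case by (simp add: lookup_single when_def)
next
  case (3 a b) then show ?case by (simp add: algebra_simps lookup_minus)
qed

lemma mcong_intro: "A - B = of_int q * X \<Longrightarrow> mcong q A B"
  by (simp add: mcong_def lookup_ofint_mult)

lemma mcong_coprime:
  assumes "coprime c q" "of_int c * (A - B) = of_int q * (X :: mpoly)"
  shows "mcong q A B"
  unfolding mcong_def
proof
  fix m
  have "Poly_Mapping.lookup (of_int c * (A - B)) m = Poly_Mapping.lookup (of_int q * X) m"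
    using assms(2) by simp
  then have "c * Poly_Mapping.lookup (A - B) m = q * Poly_Mapping.lookup X m"
    by (simp add: lookup_ofint_mult)
  then have "q dvd c * Poly_Mapping.lookup (A - B) m" by simp
  then show "q dvd Poly_Mapping.lookup (A - B) m"
    using assms(1) by (simp add: coprime_commute coprime_dvd_mult_right_iff)
qed

lemma num_facts:
  fixes p s :: nat
  assumes "odd p" "p \<ge> 3" "s \<ge> 1"
  shows "int (Mr p s) + (int p ^ s + 1) div 2 = int p ^ s"
    and "Mr p s \<ge> 1"
    and "coprime (int (Mr p s)) (int p ^ s)"
proof -
  have o: "odd (p ^ s)" using assms by simp
  obtain k where k: "p ^ s = 2 * k + 1" using o by (blast elim: oddE)
  have mk: "Mr p s = k" by (simp add: Mr_def k)
  have ik: "int p ^ s = 2 * int k + 1" using k by (metis of_nat_power of_nat_1 of_nat_add of_nat_mult of_nat_numeral)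
  have "p \<le> p ^ s" using assms by (simp add: self_le_power)
  then have ge: "p ^ s \<ge> 3" using assms by linarith
  show "int (Mr p s) + (int p ^ s + 1) div 2 = int p ^ s" unfolding mk ik by presburger
  show "Mr p s \<ge> 1" using k ge mk by linarith
  show "coprime (int (Mr p s)) (int p ^ s)"
  proof (rule coprimeI)
    fix d assume "d dvd int (Mr p s)" "d dvd int p ^ s"
    then have "d dvd int p ^ s - 2 * int (Mr p s)" by simp
    then show "is_unit d" using ik mk by simp
  qed
qed


theorem theorem4p4:
  fixes p g s l :: nat
  assumes "prime p" and "odd p" and "g \<ge> 1" and "p > 2 * g + 1"
    and "s \<ge> 1" and "l \<ge> 1"
  shows "KZ_mod p s (2 * g + 1) (Ivec p s (2 * g + 1) l)"
proof -
  define n where "n = 2 * g + 1"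
  define M where "M = Mr p s"
  define N where "N = l * p ^ s - 1"
  define q :: int where "q = int p ^ s"
  define h :: int where "h = (int p ^ s + 1) div 2"
  define I where "I = Ivec p s n l"
  define Dp where "Dp i = (\<Prod>j\<in>{1..n}-{i}. zvar i - zvar j)" for i
  define P where "P i j = (\<Prod>l\<in>{1..n}-{i,j}. zvar i - zvar l)" for i j
  have p3: "p \<ge> 3" using assms by linarith
  note nf = num_facts[OF assms(2) p3 assms(5)]
  have Mh: "int M + h = q" and M1: "M \<ge> 1" and cop: "coprime (int M) q"
    using nf unfolding M_def h_def q_def by auto
  have hq: "(of_int h :: mpoly) = of_int q - of_nat M"
    using arg_cong[OF Mh, of "of_int :: int \<Rightarrow> mpoly"] by (simp add: algebra_simps)
  have pp: "p ^ s > 0" using p3 by simp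
  have SN: "Suc N = l * p ^ s" using pp assms(6) by (simp add: N_def)
  have SNq: "(of_nat (Suc N) :: mpoly) = of_nat l * of_int q"
    unfolding SN q_def by simp
  have I_eq: "I k = coeff (Fq n M k) N" if "k \<in> {1..n}" for k
    using that M1 by (simp add: I_def Ivec_def Pvec_def Phi_quot_eq M_def N_def)
  have Dp_split: "P i j * (zvar i - zvar j) = Dp i" if "i \<in> {1..n}" "j \<in> {1..n} - {i}" for i j
    unfolding Dp_def P_def using that
    by (subst prod.remove[of "{1..n}-{i}" j]) (auto simp: Diff_rem2 mult.commute)
  have A: "mcong q (Dp i * pdz i (I k)) (of_int h * (\<Sum>j\<in>{1..n}-{i}. P i j * Omega_app i j I k))"
    if i: "i \<in> {1..n}" and k: "k \<in> {1..n}" for i k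
  proof (cases "k = i")
    case False
    define g' where "g' = coeff (Gq n M i k) N"
    have sum: "(\<Sum>j\<in>{1..n}-{i}. P i j * Omega_app i j I k) = P i k * (I i - I k)"
      using False k by (subst sum.remove[of _ k]) (auto simp: Omega_app_def intro!: sum.neutral)
    have "I i - I k = coeff (Fq n M i - Fq n M k) N" using I_eq[OF i] I_eq[OF k] by simp
    also have "\<dots> = (zvar i - zvar k) * g'"
      using F_diff[of k i n M] False i k M1 G_sym[of n M k i] by (simp add: g'_def)
    finally have d: "I i - I k = (zvar i - zvar k) * g'" .
    have l: "pdz i (I k) = - (of_nat M * g')"
      using Dz_F_ne[of i k n M] False i k I_eq[OF k] by (simp flip: coeff_Dz add: g'_def)
    have r: "of_int h * (P i k * (I i - I k)) = of_int h * Dp i * g'"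
      using Dp_split[of i k] i k False unfolding d by (simp add: mult.assoc)
    show ?thesis unfolding sum r l
      by (rule mcong_intro[where X = "- (Dp i * g')"]) (simp add: hq algebra_simps)
  next
    case True
    define g' where "g' j = coeff (Gq n M i j) N" for j
    define Sg where "Sg = (\<Sum>j\<in>{1..n}-{i}. g' j)"
    define eta where "eta = coeff (Hq n M i) N"
    define phi where "phi = coeff (Fq n M i) (Suc N)"
    define a :: mpoly where "a = of_nat (M - 1)"
    have sum: "(\<Sum>j\<in>{1..n}-{i}. P i j * Omega_app i j I k) = - (Dp i * Sg)"
    proof -
      have "(\<Sum>j\<in>{1..n}-{i}. P i j * Omega_app i j I k) = (\<Sum>j\<in>{1..n}-{i}. - (Dp i * g' j))"
      proof (rule sum.cong)
        fix j assume j: "j \<in> {1..n} - {i}"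
        have "I j - I i = coeff (Fq n M j - Fq n M i) N" using I_eq[OF i] I_eq[of j] j by simp
        also have "\<dots> = (zvar j - zvar i) * g' j"
          using F_diff[of i j n M] i j M1 by (simp add: g'_def)
        finally have "I j - I i = (zvar j - zvar i) * g' j" .
        moreover have "P i j * (zvar j - zvar i) = - Dp i"
          using Dp_split[OF i j] by (simp add: algebra_simps)
        ultimately show "P i j * Omega_app i j I k = - (Dp i * g' j)"
          using True j by (simp add: Omega_app_def) (metis mult.assoc mult_minus_left)
      qed simp
      then show ?thesis by (simp add: Sg_def sum_distrib_left sum_negf)
    qed
    have l: "pdz i (I k) = - (a * eta)"
      using Dz_F_eq[of i n M] True i I_eq[OF i] by (simp add: a_def eta_def flip: coeff_Dz)
    have key0: "coeff (pderiv (Fq n M i)) N = a * eta + of_nat M * Sg"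
      using pderiv_F[OF i, of M] by (simp add: a_def eta_def Sg_def g'_def coeff_sum)
    have key: "of_nat M * Sg = of_nat l * of_int q * phi - a * eta"
    proof -
      have "a * eta + of_nat M * Sg = of_nat (Suc N) * phi"
        unfolding key0[symmetric] phi_def by (rule coeff_pderiv)
      then have e: "of_nat l * of_int q * phi = a * eta + of_nat M * Sg" by (simp only: SNq)
      show ?thesis by (simp add: e)
    qed
    have "of_int (int M) * (Dp i * pdz i (I k) - of_int h * (\<Sum>j\<in>{1..n}-{i}. P i j * Omega_app i j I k))
        = Dp i * (- (of_nat M * a * eta) + of_int h * (of_nat M * Sg))"
      unfolding sum l by (simp add: algebra_simps)
    also have "\<dots> = Dp i * (- (of_nat M * a * eta) + of_int h * (of_nat l * of_int q * phi - a * eta))"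
      unfolding key ..
    also have "\<dots> = of_int q * (Dp i * (- (a * eta) + of_int h * of_nat l * phi))"
      by (simp add: hq algebra_simps)
    finally show ?thesis by (rule mcong_coprime[OF cop])
  qed
  have B: "mcong q (\<Sum>k\<in>{1..n}. I k) 0"
  proof -
    have "(\<Sum>k\<in>{1..n}. I k) = coeff (\<Sum>k\<in>{1..n}. Fq n M k) N"
      unfolding coeff_sum by (rule sum.cong) (simp_all add: I_eq)
    then have "of_nat M * (\<Sum>k\<in>{1..n}. I k) = coeff (pderiv (Qp M {1..n})) N"
      unfolding pderiv_Phi coeff_smult by simp
    also have "\<dots> = of_int q * (of_nat l * coeff (Qp M {1..n}) (Suc N))"
      unfolding coeff_pderiv SNq by (simp only: mult_ac)
    finally have "of_int (int M) * ((\<Sum>k\<in>{1..n}. I k) - 0) = of_int q * (of_nat l * coeff (Qp M {1..n}) (Suc N))"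
      by simp
    then show ?thesis by (rule mcong_coprime[OF cop])
  qed
  show ?thesis
    using A B unfolding KZ_mod_def Let_def Dp_def P_def q_def h_def n_def I_def by blast
qed

end
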